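(* Let $\Gamma$ be a symmetric bimatrix game. In a fully symmetric indirect correlated equilibrium of $\Gamma$ in which each player knows the state of the world, the distribution of the players' actions conditioned on the state is almost surely a symmetric Nash equilibrium of $\Gamma$; moreover, every symmetric Nash equilibrium of $\Gamma$ arises in this way.
   Context: A symmetric bimatrix game: two players with common finite strategy set $C_1$ and utilities with $u_1(s_1,s_2)=u_2(s_2,s_1)$. A correlation scheme consists of a random state of the world, independent private noise signals for each player (independent of the state), for each player a map from (state, own noise) to that player's information, and for each player $i$ a function $f_i$ from his information to his action in $C_1$; all these data are known to the players, only realizations are hidden. It is an indirect correlated equilibrium if no player can increase his expected utility by unilaterally replacing $f_i$ by another function of his information. A correlation scheme is fully symmetric if all players have the same noise distribution, the same map from state and noise to information, and the same map $f_i$ from information to action. A player knows the state of the world if the state is a (measurable) function of his information. A symmetric Nash equilibrium is a mixed strategy profile $(x,x)$ in which each player's mixed strategy is a best response to the other's. *)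

theory Defs
  imports "HOL-Probability.Probability"
begin

text \<open>A symmetric bimatrix game is given by a finite strategy type 'c and a utility
  u :: 'c => 'c => real for player 1; player 2's utility is u2 s1 s2 = u s2 s1.\<close>

definition mixed :: "('c::finite \<Rightarrow> real) \<Rightarrow> bool" where
  "mixed x \<longleftrightarrow> (\<forall>c. 0 \<le> x c) \<and> (\<Sum>c\<in>UNIV. x c) = 1"

definition payoff1 :: "('c::finite \<Rightarrow> 'c \<Rightarrow> real) \<Rightarrow> ('c \<Rightarrow> real) \<Rightarrow> ('c \<Rightarrow> real) \<Rightarrow> real" where
  "payoff1 u x y = (\<Sum>a\<in>UNIV. \<Sum>b\<in>UNIV. x a * y b * u a b)"

definition payoff2 :: "('c::finite \<Rightarrow> 'c \<Rightarrow> real) \<Rightarrow> ('c \<Rightarrow> real) \<Rightarrow> ('c \<Rightarrow> real) \<Rightarrow> real" where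
  "payoff2 u x y = (\<Sum>a\<in>UNIV. \<Sum>b\<in>UNIV. x a * y b * u b a)"

definition nash :: "('c::finite \<Rightarrow> 'c \<Rightarrow> real) \<Rightarrow> ('c \<Rightarrow> real) \<Rightarrow> ('c \<Rightarrow> real) \<Rightarrow> bool" where
  "nash u x y \<longleftrightarrow> mixed x \<and> mixed y
     \<and> (\<forall>x'. mixed x' \<longrightarrow> payoff1 u x' y \<le> payoff1 u x y)
     \<and> (\<forall>y'. mixed y' \<longrightarrow> payoff2 u x y' \<le> payoff2 u x y)"

definition sym_nash :: "('c::finite \<Rightarrow> 'c \<Rightarrow> real) \<Rightarrow> ('c \<Rightarrow> real) \<Rightarrow> bool" where
  "sym_nash u x \<longleftrightarrow> nash u x x"

text \<open>State of the world: distribution P.  Private noises: Q1, Q2, independent of each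
  other and of the state, so the underlying probability space is P x (Q1 x Q2),
  with points (state, (noise1, noise2)).  Player i's information is gi state noise_i
  (in the measurable space Ii), and his action is fi applied to his information.\<close>

definition correlation_scheme ::
  "'w measure \<Rightarrow> 'n1 measure \<Rightarrow> 'n2 measure \<Rightarrow> 'i1 measure \<Rightarrow> 'i2 measure \<Rightarrow>
   ('w \<Rightarrow> 'n1 \<Rightarrow> 'i1) \<Rightarrow> ('w \<Rightarrow> 'n2 \<Rightarrow> 'i2) \<Rightarrow> ('i1 \<Rightarrow> 'c) \<Rightarrow> ('i2 \<Rightarrow> 'c) \<Rightarrow> bool" where
  "correlation_scheme P Q1 Q2 I1 I2 g1 g2 f1 f2 \<longleftrightarrow>
     prob_space P \<and> prob_space Q1 \<and> prob_space Q2
     \<and> (\<lambda>(w, n). g1 w n) \<in> P \<Otimes>\<^sub>M Q1 \<rightarrow>\<^sub>M I1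
     \<and> (\<lambda>(w, n). g2 w n) \<in> P \<Otimes>\<^sub>M Q2 \<rightarrow>\<^sub>M I2
     \<and> f1 \<in> I1 \<rightarrow>\<^sub>M count_space UNIV
     \<and> f2 \<in> I2 \<rightarrow>\<^sub>M count_space UNIV"

definition exp_util1 ::
  "('c \<Rightarrow> 'c \<Rightarrow> real) \<Rightarrow> 'w measure \<Rightarrow> 'n1 measure \<Rightarrow> 'n2 measure \<Rightarrow>
   ('w \<Rightarrow> 'n1 \<Rightarrow> 'i1) \<Rightarrow> ('w \<Rightarrow> 'n2 \<Rightarrow> 'i2) \<Rightarrow> ('i1 \<Rightarrow> 'c) \<Rightarrow> ('i2 \<Rightarrow> 'c) \<Rightarrow> real" where
  "exp_util1 u P Q1 Q2 g1 g2 a1 a2 =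
     (\<integral>z. u (a1 (g1 (fst z) (fst (snd z)))) (a2 (g2 (fst z) (snd (snd z)))) \<partial>(P \<Otimes>\<^sub>M (Q1 \<Otimes>\<^sub>M Q2)))"

definition exp_util2 ::
  "('c \<Rightarrow> 'c \<Rightarrow> real) \<Rightarrow> 'w measure \<Rightarrow> 'n1 measure \<Rightarrow> 'n2 measure \<Rightarrow>
   ('w \<Rightarrow> 'n1 \<Rightarrow> 'i1) \<Rightarrow> ('w \<Rightarrow> 'n2 \<Rightarrow> 'i2) \<Rightarrow> ('i1 \<Rightarrow> 'c) \<Rightarrow> ('i2 \<Rightarrow> 'c) \<Rightarrow> real" where
  "exp_util2 u P Q1 Q2 g1 g2 a1 a2 =
     (\<integral>z. u (a2 (g2 (fst z) (snd (snd z)))) (a1 (g1 (fst z) (fst (snd z)))) \<partial>(P \<Otimes>\<^sub>M (Q1 \<Otimes>\<^sub>M Q2)))"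

definition indirect_CE ::
  "('c \<Rightarrow> 'c \<Rightarrow> real) \<Rightarrow> 'w measure \<Rightarrow> 'n1 measure \<Rightarrow> 'n2 measure \<Rightarrow> 'i1 measure \<Rightarrow> 'i2 measure \<Rightarrow>
   ('w \<Rightarrow> 'n1 \<Rightarrow> 'i1) \<Rightarrow> ('w \<Rightarrow> 'n2 \<Rightarrow> 'i2) \<Rightarrow> ('i1 \<Rightarrow> 'c) \<Rightarrow> ('i2 \<Rightarrow> 'c) \<Rightarrow> bool" where
  "indirect_CE u P Q1 Q2 I1 I2 g1 g2 f1 f2 \<longleftrightarrow>
     correlation_scheme P Q1 Q2 I1 I2 g1 g2 f1 f2
     \<and> (\<forall>f' \<in> I1 \<rightarrow>\<^sub>M count_space UNIV.
          exp_util1 u P Q1 Q2 g1 g2 f' f2 \<le> exp_util1 u P Q1 Q2 g1 g2 f1 f2)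
     \<and> (\<forall>f' \<in> I2 \<rightarrow>\<^sub>M count_space UNIV.
          exp_util2 u P Q1 Q2 g1 g2 f1 f' \<le> exp_util2 u P Q1 Q2 g1 g2 f1 f2)"

definition fully_symmetric ::
  "'n measure \<Rightarrow> 'n measure \<Rightarrow> 'i measure \<Rightarrow> 'i measure \<Rightarrow>
   ('w \<Rightarrow> 'n \<Rightarrow> 'i) \<Rightarrow> ('w \<Rightarrow> 'n \<Rightarrow> 'i) \<Rightarrow> ('i \<Rightarrow> 'c) \<Rightarrow> ('i \<Rightarrow> 'c) \<Rightarrow> bool" where
  "fully_symmetric Q1 Q2 I1 I2 g1 g2 f1 f2 \<longleftrightarrow> Q1 = Q2 \<and> I1 = I2 \<and> g1 = g2 \<and> f1 = f2"

definition knows_state :: "'w measure \<Rightarrow> 'n measure \<Rightarrow> 'i measure \<Rightarrow> ('w \<Rightarrow> 'n \<Rightarrow> 'i) \<Rightarrow> bool" where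
  "knows_state P Q I g \<longleftrightarrow>
     (\<exists>h \<in> I \<rightarrow>\<^sub>M P. \<forall>w \<in> space P. \<forall>n \<in> space Q. h (g w n) = w)"

text \<open>Conditional distribution of a player's action given the state w
  (the noise is independent of the state).\<close>
definition cond_dist :: "'n measure \<Rightarrow> ('w \<Rightarrow> 'n \<Rightarrow> 'i) \<Rightarrow> ('i \<Rightarrow> 'c) \<Rightarrow> 'w \<Rightarrow> 'c \<Rightarrow> real" where
  "cond_dist Q g f w c = measure Q {n \<in> space Q. f (g w n) = c}"

end

theory Submission
  imports Defs
begin

definition cd :: "'n measure \<Rightarrow> ('w \<Rightarrow> 'n \<Rightarrow> 'c) \<Rightarrow> 'w \<Rightarrow> 'c \<Rightarrow> real" where
  "cd Q F w c = measure Q {n \<in> space Q. F w n = c}"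

lemma cd_meas:
  fixes F :: "'w \<Rightarrow> 'n \<Rightarrow> 'c::finite"
  assumes Q: "prob_space Q"
    and F: "(\<lambda>(w,n). F w n) \<in> P \<Otimes>\<^sub>M Q \<rightarrow>\<^sub>M count_space UNIV"
  shows "(\<lambda>w. cd Q F w c) \<in> borel_measurable P"
proof -
  interpret Q: prob_space Q by fact
  define S where "S = (\<lambda>(w,n). F w n) -` {c} \<inter> space (P \<Otimes>\<^sub>M Q)"
  have S: "S \<in> sets (P \<Otimes>\<^sub>M Q)" unfolding S_def using F by (rule measurable_sets) auto
  have m: "(\<lambda>w. emeasure Q (Pair w -` S)) \<in> borel_measurable P"
    using Q.measurable_emeasure_Pair[OF S] .
  have eq: "w \<in> space P \<Longrightarrow> Pair w -` S = {n \<in> space Q. F w n = c}" for w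
    by (auto simp: S_def space_pair_measure)
  have "(\<lambda>w. enn2real (emeasure Q (Pair w -` S))) \<in> borel_measurable P"
    using m by measurable
  then show ?thesis
    by (rule measurable_cong[THEN iffD1, rotated]) (simp add: eq cd_def measure_def)
qed

lemma cd_nonneg: "0 \<le> cd Q F w c" by (simp add: cd_def)
lemma cd_le1: "prob_space Q \<Longrightarrow> cd Q F w c \<le> 1"
  by (simp add: cd_def prob_space.prob_le_1)

lemma cd_sets:
  fixes F :: "'w \<Rightarrow> 'n \<Rightarrow> 'c::finite"
  assumes Q: "prob_space Q"
    and F: "(\<lambda>(w,n). F w n) \<in> P \<Otimes>\<^sub>M Q \<rightarrow>\<^sub>M count_space UNIV" and w: "w \<in> space P"
  shows "{n \<in> space Q. F w n = c} \<in> sets Q"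
proof -
  define S where "S = (\<lambda>(w,n). F w n) -` {c} \<inter> space (P \<Otimes>\<^sub>M Q)"
  have S: "S \<in> sets (P \<Otimes>\<^sub>M Q)" unfolding S_def using F by (rule measurable_sets) auto
  have "Pair w -` S = {n \<in> space Q. F w n = c}"
    using w by (auto simp: S_def space_pair_measure)
  with sets_Pair1[OF S, of w] show ?thesis by metis
qed

lemma cd_mixed:
  fixes F :: "'w \<Rightarrow> 'n \<Rightarrow> 'c::finite"
  assumes Q: "prob_space Q"
    and F: "(\<lambda>(w,n). F w n) \<in> P \<Otimes>\<^sub>M Q \<rightarrow>\<^sub>M count_space UNIV" and w: "w \<in> space P"
  shows "mixed (cd Q F w)"
proof -
  interpret Q: prob_space Q by fact
  have "(\<Sum>c\<in>UNIV. cd Q F w c) = measure Q (\<Union>c\<in>UNIV. {n \<in> space Q. F w n = c})"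
    unfolding cd_def
    by (rule measure_finite_Union[symmetric])
       (auto simp: disjoint_family_on_def cd_sets[OF Q F w])
  also have "(\<Union>c\<in>UNIV. {n \<in> space Q. F w n = c}) = space Q" by auto
  finally show ?thesis by (simp add: mixed_def cd_nonneg Q.prob_space)
qed

lemma cd_int:
  fixes F1 :: "'w \<Rightarrow> 'n1 \<Rightarrow> 'c::finite" and F2 :: "'w \<Rightarrow> 'n2 \<Rightarrow> 'c"
  assumes P: "prob_space P" and Q1: "prob_space Q1" and Q2: "prob_space Q2"
    and F1: "(\<lambda>(w,n). F1 w n) \<in> P \<Otimes>\<^sub>M Q1 \<rightarrow>\<^sub>M count_space UNIV"
    and F2: "(\<lambda>(w,n). F2 w n) \<in> P \<Otimes>\<^sub>M Q2 \<rightarrow>\<^sub>M count_space UNIV"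
  shows "integrable P (\<lambda>w. cd Q1 F1 w a * cd Q2 F2 w b * r)"
proof -
  interpret P: prob_space P by fact
  show ?thesis
  proof (rule P.integrable_const_bound[where B="\<bar>r\<bar>"])
    show "AE x in P. norm (cd Q1 F1 x a * cd Q2 F2 x b * r) \<le> \<bar>r\<bar>"
    proof (rule AE_I2)
      fix x
      have "cd Q1 F1 x a * cd Q2 F2 x b \<le> 1 * 1"
        by (intro mult_mono) (auto simp: cd_le1 Q1 Q2 cd_nonneg)
        then have "cd Q1 F1 x a * cd Q2 F2 x b * \<bar>r\<bar> \<le> 1 * \<bar>r\<bar>"
          by (intro mult_right_mono) auto
        then show "norm (cd Q1 F1 x a * cd Q2 F2 x b * r) \<le> \<bar>r\<bar>"
        using cd_nonneg[of Q1 F1 x a] cd_nonneg[of Q2 F2 x b]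
        by (simp add: abs_mult)
    qed
    show "(\<lambda>w. cd Q1 F1 w a * cd Q2 F2 w b * r) \<in> borel_measurable P"
      using cd_meas[OF Q1 F1, of a] cd_meas[OF Q2 F2, of b] by measurable
  qed
qed

lemma key:
  fixes F1 :: "'w \<Rightarrow> 'n1 \<Rightarrow> 'c::finite" and F2 :: "'w \<Rightarrow> 'n2 \<Rightarrow> 'c"
    and v :: "'c \<Rightarrow> 'c \<Rightarrow> real"
  assumes P: "prob_space P" and Q1: "prob_space Q1" and Q2: "prob_space Q2"
    and F1: "(\<lambda>(w,n). F1 w n) \<in> P \<Otimes>\<^sub>M Q1 \<rightarrow>\<^sub>M count_space UNIV"
    and F2: "(\<lambda>(w,n). F2 w n) \<in> P \<Otimes>\<^sub>M Q2 \<rightarrow>\<^sub>M count_space UNIV"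
  shows "(\<integral>z. v (F1 (fst z) (fst (snd z))) (F2 (fst z) (snd (snd z))) \<partial>(P \<Otimes>\<^sub>M (Q1 \<Otimes>\<^sub>M Q2)))
       = (\<integral>w. (\<Sum>a\<in>UNIV. \<Sum>b\<in>UNIV. cd Q1 F1 w a * cd Q2 F2 w b * v a b) \<partial>P)"
proof -
  interpret P: prob_space P by fact
  interpret Q1: prob_space Q1 by fact
  interpret Q2: prob_space Q2 by fact
  interpret Q12: prob_space "Q1 \<Otimes>\<^sub>M Q2" by (rule prob_space_pair) unfold_locales
  interpret M: prob_space "P \<Otimes>\<^sub>M (Q1 \<Otimes>\<^sub>M Q2)" by (rule prob_space_pair) unfold_locales
  define M where "M = P \<Otimes>\<^sub>M (Q1 \<Otimes>\<^sub>M Q2)"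
  define G1 :: "'w \<times> 'n1 \<times> 'n2 \<Rightarrow> 'c" where "G1 = (\<lambda>z. F1 (fst z) (fst (snd z)))"
  define G2 :: "'w \<times> 'n1 \<times> 'n2 \<Rightarrow> 'c" where "G2 = (\<lambda>z. F2 (fst z) (snd (snd z)))"
  have G1: "G1 \<in> M \<rightarrow>\<^sub>M count_space UNIV"
  proof -
    have "(\<lambda>(w,n). F1 w n) \<circ> (\<lambda>z. (fst z, fst (snd z))) \<in> M \<rightarrow>\<^sub>M count_space UNIV"
      by (rule measurable_comp[OF _ F1]) (simp add: M_def)
    then show ?thesis by (simp add: G1_def o_def)
  qed
  have G2: "G2 \<in> M \<rightarrow>\<^sub>M count_space UNIV"
  proof -
    have "(\<lambda>(w,n). F2 w n) \<circ> (\<lambda>z. (fst z, snd (snd z))) \<in> M \<rightarrow>\<^sub>M count_space UNIV"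
      by (rule measurable_comp[OF _ F2]) (simp add: M_def)
    then show ?thesis by (simp add: G2_def o_def)
  qed
  define S where "S a b = {z \<in> space M. G1 z = a \<and> G2 z = b}" for a b
  have S: "S a b \<in> sets M" for a b
  proof -
    have "S a b = (G1 -` {a} \<inter> space M) \<inter> (G2 -` {b} \<inter> space M)" by (auto simp: S_def)
    also have "\<dots> \<in> sets M"
      by (intro sets.Int measurable_sets[OF G1] measurable_sets[OF G2]) auto
    finally show ?thesis .
  qed
  have SI: "S a b \<inter> space M = S a b" for a b by (auto simp: S_def)
  have int_S: "integrable M (indicator (S a b) :: _ \<Rightarrow> real)" for a b
    using integrable_indicator[OF S, of a b "1::real"] by (simp add: M_def M.emeasure_finite less_top[symmetric])
  have meas_S: "measure M (S a b) = (\<integral>w. cd Q1 F1 w a * cd Q2 F2 w b \<partial>P)" for a b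
  proof -
    have eqs: "Pair w -` S a b = {n \<in> space Q1. F1 w n = a} \<times> {n \<in> space Q2. F2 w n = b}"
      if "w \<in> space P" for w
      using that by (auto simp: S_def M_def G1_def G2_def space_pair_measure)
    have "emeasure M (S a b) = (\<integral>\<^sup>+w. emeasure (Q1 \<Otimes>\<^sub>M Q2) (Pair w -` S a b) \<partial>P)"
      unfolding M_def by (rule Q12.emeasure_pair_measure_alt) (use S in \<open>simp add: M_def\<close>)
    also have "\<dots> = (\<integral>\<^sup>+w. ennreal (cd Q1 F1 w a * cd Q2 F2 w b) \<partial>P)"
    proof (rule nn_integral_cong)
      fix w assume w: "w \<in> space P"
      show "emeasure (Q1 \<Otimes>\<^sub>M Q2) (Pair w -` S a b) = ennreal (cd Q1 F1 w a * cd Q2 F2 w b)"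
        unfolding eqs[OF w]
        by (subst Q2.emeasure_pair_measure_Times)
           (auto simp: cd_sets[OF Q1 F1 w] cd_sets[OF Q2 F2 w] Q1.emeasure_eq_measure
              Q2.emeasure_eq_measure cd_def ennreal_mult)
    qed
    finally have e: "emeasure M (S a b) = (\<integral>\<^sup>+w. ennreal (cd Q1 F1 w a * cd Q2 F2 w b) \<partial>P)" .
    have "(\<integral>w. cd Q1 F1 w a * cd Q2 F2 w b \<partial>P) = enn2real (\<integral>\<^sup>+w. ennreal (cd Q1 F1 w a * cd Q2 F2 w b) \<partial>P)"
      by (rule integral_eq_nn_integral)
         (use cd_meas[OF Q1 F1, of a] cd_meas[OF Q2 F2, of b] in \<open>auto simp: cd_nonneg\<close>)
    then show ?thesis using e by (simp add: measure_def)
  qed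
  have "(\<integral>z. v (G1 z) (G2 z) \<partial>M) = (\<integral>z. (\<Sum>a\<in>UNIV. \<Sum>b\<in>UNIV. v a b * indicator (S a b) z) \<partial>M)"
  proof (rule Bochner_Integration.integral_cong[OF refl])
    fix z assume z: "z \<in> space M"
    have i: "indicator (S a b) z = (if a = G1 z \<and> b = G2 z then 1 else (0::real))" for a b
      using z by (auto simp: S_def)
    have r: "(\<Sum>b\<in>UNIV. v a b * indicator (S a b) z) = (if a = G1 z then v a (G2 z) else 0)" for a
      by (cases "a = G1 z") (simp_all add: i mult.commute[of "v _ _"] if_distrib[of "\<lambda>x. x * _"] cong: if_cong)
    have "(\<Sum>a\<in>UNIV. \<Sum>b\<in>UNIV. v a b * indicator (S a b) z) = v (G1 z) (G2 z)"
      by (simp add: r)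
    then show "v (G1 z) (G2 z) = (\<Sum>a\<in>UNIV. \<Sum>b\<in>UNIV. v a b * indicator (S a b) z)" ..
  qed
  also have "\<dots> = (\<Sum>a\<in>UNIV. \<Sum>b\<in>UNIV. v a b * measure M (S a b))"
  proof -
    have "(\<integral>z. (\<Sum>a\<in>UNIV. \<Sum>b\<in>UNIV. v a b * indicator (S a b) z) \<partial>M)
        = (\<Sum>a\<in>UNIV. (\<integral>z. (\<Sum>b\<in>UNIV. v a b * indicator (S a b) z) \<partial>M))"
    proof (rule Bochner_Integration.integral_sum)
      fix a show "integrable M (\<lambda>z. \<Sum>b\<in>UNIV. v a b * indicator (S a b) z)"
        by (rule Bochner_Integration.integrable_sum) (rule integrable_mult_right, rule int_S)
    qed
    also have "\<dots> = (\<Sum>a\<in>UNIV. \<Sum>b\<in>UNIV. (\<integral>z. v a b * indicator (S a b) z \<partial>M))"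
      by (intro sum.cong refl Bochner_Integration.integral_sum integrable_mult_right int_S)
    also have "\<dots> = (\<Sum>a\<in>UNIV. \<Sum>b\<in>UNIV. v a b * measure M (S a b))"
      by (intro sum.cong refl) (simp add: SI)
    finally show ?thesis .
  qed
  also have "\<dots> = (\<Sum>a\<in>UNIV. \<Sum>b\<in>UNIV. (\<integral>w. cd Q1 F1 w a * cd Q2 F2 w b * v a b \<partial>P))"
    by (simp add: meas_S mult.commute)
  also have "\<dots> = (\<integral>w. (\<Sum>a\<in>UNIV. \<Sum>b\<in>UNIV. cd Q1 F1 w a * cd Q2 F2 w b * v a b) \<partial>P)"
    using cd_int[OF P Q1 Q2 F1 F2] by (simp add: Bochner_Integration.integral_sum)
  finally show ?thesis by (simp add: M_def G1_def G2_def)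
qed

lemma cond_dist_cd: "cond_dist Q g f = cd Q (\<lambda>w n. f (g w n))"
  by (simp add: cond_dist_def cd_def fun_eq_iff)

lemma comp_meas:
  assumes "(\<lambda>(w,n). g w n) \<in> P \<Otimes>\<^sub>M Q \<rightarrow>\<^sub>M I" "a \<in> I \<rightarrow>\<^sub>M count_space UNIV"
  shows "(\<lambda>(w,n). a (g w n)) \<in> P \<Otimes>\<^sub>M Q \<rightarrow>\<^sub>M count_space UNIV"
proof -
  have "a \<circ> (\<lambda>(w,n). g w n) \<in> P \<Otimes>\<^sub>M Q \<rightarrow>\<^sub>M count_space UNIV"
    by (rule measurable_comp[OF assms])
  moreover have "a \<circ> (\<lambda>(w,n). g w n) = (\<lambda>(w,n). a (g w n))" by (auto simp: fun_eq_iff)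
  ultimately show ?thesis by simp
qed

lemma eu1:
  fixes u :: "'c::finite \<Rightarrow> 'c \<Rightarrow> real" and a1 :: "'i1 \<Rightarrow> 'c" and a2 :: "'i2 \<Rightarrow> 'c"
  assumes cs: "correlation_scheme P Q1 Q2 I1 I2 g1 g2 b1 b2"
    and a1: "a1 \<in> I1 \<rightarrow>\<^sub>M count_space UNIV" and a2: "a2 \<in> I2 \<rightarrow>\<^sub>M count_space UNIV"
  shows "exp_util1 u P Q1 Q2 g1 g2 a1 a2 = (\<integral>w. payoff1 u (cond_dist Q1 g1 a1 w) (cond_dist Q2 g2 a2 w) \<partial>P)"
proof -
  from cs have P: "prob_space P" and Q1: "prob_space Q1" and Q2: "prob_space Q2"
    and G1: "(\<lambda>(w,n). g1 w n) \<in> P \<Otimes>\<^sub>M Q1 \<rightarrow>\<^sub>M I1"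
    and G2: "(\<lambda>(w,n). g2 w n) \<in> P \<Otimes>\<^sub>M Q2 \<rightarrow>\<^sub>M I2"
    by (auto simp: correlation_scheme_def)
  show ?thesis
    using key[OF P Q1 Q2 comp_meas[OF G1 a1] comp_meas[OF G2 a2], of u]
    by (simp add: exp_util1_def payoff1_def cond_dist_cd)
qed

lemma eu2:
  fixes u :: "'c::finite \<Rightarrow> 'c \<Rightarrow> real" and a1 :: "'i1 \<Rightarrow> 'c" and a2 :: "'i2 \<Rightarrow> 'c"
  assumes cs: "correlation_scheme P Q1 Q2 I1 I2 g1 g2 b1 b2"
    and a1: "a1 \<in> I1 \<rightarrow>\<^sub>M count_space UNIV" and a2: "a2 \<in> I2 \<rightarrow>\<^sub>M count_space UNIV"
  shows "exp_util2 u P Q1 Q2 g1 g2 a1 a2 = (\<integral>w. payoff2 u (cond_dist Q1 g1 a1 w) (cond_dist Q2 g2 a2 w) \<partial>P)"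
proof -
  from cs have P: "prob_space P" and Q1: "prob_space Q1" and Q2: "prob_space Q2"
    and G1: "(\<lambda>(w,n). g1 w n) \<in> P \<Otimes>\<^sub>M Q1 \<rightarrow>\<^sub>M I1"
    and G2: "(\<lambda>(w,n). g2 w n) \<in> P \<Otimes>\<^sub>M Q2 \<rightarrow>\<^sub>M I2"
    by (auto simp: correlation_scheme_def)
  show ?thesis
    using key[OF P Q1 Q2 comp_meas[OF G1 a1] comp_meas[OF G2 a2], of "\<lambda>a b. u b a"]
    by (simp add: exp_util2_def payoff2_def cond_dist_cd)
qed

definition delta :: "'c \<Rightarrow> 'c \<Rightarrow> real" where "delta c = (\<lambda>a. if a = c then 1 else 0)"

lemma payoff1_expand: "payoff1 u x y = (\<Sum>a\<in>UNIV. x a * (\<Sum>b\<in>UNIV. y b * u a b))"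
  by (simp add: payoff1_def sum_distrib_left mult.assoc)

lemma payoff1_delta: "payoff1 u (delta c) y = (\<Sum>b\<in>UNIV. y b * u c b)"
  unfolding payoff1_expand delta_def
  by (simp add: if_distrib[of "\<lambda>t. t * _"] cong: if_cong)

lemma payoff2_swap: "payoff2 u x y = payoff1 u y x"
  unfolding payoff1_def payoff2_def
  by (subst sum.swap) (simp add: mult_ac)

lemma nash_of:
  assumes mx: "mixed x" and dev: "\<And>c. payoff1 u (delta c) x \<le> payoff1 u x x"
  shows "nash u x x"
proof -
  have one: "payoff1 u x' x \<le> payoff1 u x x" if "mixed x'" for x'
  proof -
    have "payoff1 u x' x = (\<Sum>a\<in>UNIV. x' a * payoff1 u (delta a) x)"
      by (simp add: payoff1_expand[of u x'] payoff1_delta)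
    also have "\<dots> \<le> (\<Sum>a\<in>UNIV. x' a * payoff1 u x x)"
      using that by (intro sum_mono mult_left_mono dev) (auto simp: mixed_def)
    also have "\<dots> = payoff1 u x x"
      using that by (simp add: sum_distrib_right[symmetric] mixed_def)
    finally show ?thesis .
  qed
  show ?thesis unfolding nash_def using mx one by (simp add: payoff2_swap)
qed

lemma payoff_bound:
  assumes "\<And>a. 0 \<le> x a \<and> x a \<le> 1" "\<And>a. 0 \<le> y a \<and> y a \<le> 1"
  shows "\<bar>payoff1 u x y\<bar> \<le> (\<Sum>a\<in>UNIV. \<Sum>b\<in>UNIV. \<bar>u a b\<bar>)"
proof -
  have "\<bar>payoff1 u x y\<bar> \<le> (\<Sum>a\<in>UNIV. \<bar>\<Sum>b\<in>UNIV. x a * y b * u a b\<bar>)"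
    unfolding payoff1_def by (rule sum_abs)
  also have "\<dots> \<le> (\<Sum>a\<in>UNIV. \<Sum>b\<in>UNIV. \<bar>x a * y b * u a b\<bar>)"
    by (intro sum_mono sum_abs)
  also have "\<dots> \<le> (\<Sum>a\<in>UNIV. \<Sum>b\<in>UNIV. \<bar>u a b\<bar>)"
  proof (intro sum_mono)
    fix a b
    have "\<bar>x a * y b\<bar> \<le> 1 * 1" using assms[of a] assms(2)[of b]
      by (simp add: abs_mult) (metis mult_le_one)
    then have "\<bar>x a * y b\<bar> * \<bar>u a b\<bar> \<le> 1 * \<bar>u a b\<bar>" by (intro mult_right_mono) auto
    then show "\<bar>x a * y b * u a b\<bar> \<le> \<bar>u a b\<bar>" by (simp add: abs_mult)
  qed
  finally show ?thesis .
qed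

lemma part1:
  fixes u :: "'c::finite \<Rightarrow> 'c \<Rightarrow> real" and f :: "'i \<Rightarrow> 'c" and g :: "'w \<Rightarrow> 'n \<Rightarrow> 'i"
  assumes CE: "indirect_CE u P Q Q I I g g f f" and ks: "knows_state P Q I g"
  shows "AE w in P. nash u (cond_dist Q g f w) (cond_dist Q g f w)"
proof -
  have cs: "correlation_scheme P Q Q I I g g f f"
    and dev1: "\<And>f'. f' \<in> I \<rightarrow>\<^sub>M count_space UNIV \<Longrightarrow>
        exp_util1 u P Q Q g g f' f \<le> exp_util1 u P Q Q g g f f"
    using CE unfolding indirect_CE_def by blast+
  from cs have Pp: "prob_space P" and Qp: "prob_space Q"
    and G: "(\<lambda>(w,n). g w n) \<in> P \<Otimes>\<^sub>M Q \<rightarrow>\<^sub>M I"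
    and fm: "f \<in> I \<rightarrow>\<^sub>M count_space UNIV"
    unfolding correlation_scheme_def by blast+
  interpret P: prob_space P by fact
  obtain h where hm: "h \<in> I \<rightarrow>\<^sub>M P"
    and hg: "\<And>w n. w \<in> space P \<Longrightarrow> n \<in> space Q \<Longrightarrow> h (g w n) = w"
    using ks unfolding knows_state_def by blast
  define X where "X w = cond_dist Q g f w" for w
  have Fm: "(\<lambda>(w,n). f (g w n)) \<in> P \<Otimes>\<^sub>M Q \<rightarrow>\<^sub>M count_space UNIV"
    by (rule comp_meas[OF G fm])
  have Xcd: "X w = cd Q (\<lambda>w n. f (g w n)) w" for w by (simp add: X_def cond_dist_cd)
  have Xmeas[measurable]: "(\<lambda>w. X w a) \<in> borel_measurable P" for a
    unfolding Xcd by (rule cd_meas[OF Qp Fm])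
  have Xmix: "w \<in> space P \<Longrightarrow> mixed (X w)" for w
    unfolding Xcd by (rule cd_mixed[OF Qp Fm])
  have X01: "0 \<le> X w a \<and> X w a \<le> 1" for w a
    unfolding Xcd by (simp add: cd_nonneg cd_le1[OF Qp])
  have d01: "0 \<le> delta c a \<and> delta c a \<le> (1::real)" for c a :: 'c
    by (simp add: delta_def)
  define K where "K = (\<Sum>a\<in>UNIV. \<Sum>b\<in>UNIV. \<bar>u a b\<bar>)"
  have bXX: "\<bar>payoff1 u (X w) (X w)\<bar> \<le> K" for w
    unfolding K_def by (rule payoff_bound) (simp_all add: X01)
  have bdX: "\<bar>payoff1 u (delta c) (X w)\<bar> \<le> K" for w c
    unfolding K_def by (rule payoff_bound) (simp_all add: X01 d01)
  have pXXm[measurable]: "(\<lambda>w. payoff1 u (X w) (X w)) \<in> borel_measurable P"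
    unfolding payoff1_def by measurable
  have pdXm[measurable]: "(\<lambda>w. payoff1 u (delta c) (X w)) \<in> borel_measurable P" for c
    unfolding payoff1_def by measurable
  have intXX: "integrable P (\<lambda>w. payoff1 u (X w) (X w))"
    by (rule P.integrable_const_bound[where B=K]) (auto intro!: AE_I2 simp: bXX)
  define pay where "pay c w = payoff1 u (delta c) (X w) - payoff1 u (X w) (X w)" for c w
  have paym[measurable]: "pay c \<in> borel_measurable P" for c
    unfolding pay_def[abs_def] by measurable
  have AEc: "AE w in P. pay c w \<le> 0" for c
  proof -
    define B where "B = {w \<in> space P. 0 < pay c w}"
    have B: "B \<in> sets P" unfolding B_def by measurable
    define f' where "f' i = (if i \<in> h -` B \<inter> space I then c else f i)" for i
    have f'm: "f' \<in> I \<rightarrow>\<^sub>M count_space UNIV"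
    proof -
      have "(\<lambda>i. if i \<in> h -` B \<inter> space I then c else f i) \<in> I \<rightarrow>\<^sub>M count_space UNIV"
        by (rule measurable_If_set[OF measurable_const fm])
           (simp, use measurable_sets[OF hm B] in \<open>simp only: Int_assoc Int_absorb\<close>)
      then show ?thesis by (simp add: f'_def[abs_def])
    qed
    have gsp: "g w n \<in> space I" if "w \<in> space P" "n \<in> space Q" for w n
      using measurable_space[OF G, of "(w,n)"] that by (simp add: space_pair_measure)
    have Xf': "cond_dist Q g f' w = (if w \<in> B then delta c else X w)" if w: "w \<in> space P" for w
    proof (cases "w \<in> B")
      case True
      have "cond_dist Q g f' w a = delta c a" for a
      proof -
        have "{n \<in> space Q. f' (g w n) = a} = {n \<in> space Q. c = a}"
          using True w gsp hg by (auto simp: f'_def)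
        then show ?thesis
          by (simp add: cond_dist_def delta_def prob_space.prob_space[OF Qp])
      qed
      then show ?thesis using True by auto
    next
      case False
      have "cond_dist Q g f' w a = X w a" for a
      proof -
        have "{n \<in> space Q. f' (g w n) = a} = {n \<in> space Q. f (g w n) = a}"
          using False w gsp hg by (auto simp: f'_def)
        then show ?thesis by (simp add: cond_dist_def X_def)
      qed
      then show ?thesis using False by auto
    qed
    have intB: "integrable P (\<lambda>w. indicator B w * pay c w)"
    proof (rule P.integrable_const_bound[where B="K + K"])
      show "AE x in P. norm (indicator B x * pay c x) \<le> K + K"
      proof (rule AE_I2)
        fix x
        have "\<bar>pay c x\<bar> \<le> K + K" using bXX[of x] bdX[of c x] by (simp add: pay_def)
        then show "norm (indicator B x * pay c x) \<le> K + K"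
          by (auto simp: indicator_def)
      qed
      show "(\<lambda>w. indicator B w * pay c w) \<in> borel_measurable P"
        using B by measurable
    qed
    have "exp_util1 u P Q Q g g f' f \<le> exp_util1 u P Q Q g g f f" by (rule dev1[OF f'm])
    then have le: "(\<integral>w. payoff1 u (cond_dist Q g f' w) (X w) \<partial>P) \<le> (\<integral>w. payoff1 u (X w) (X w) \<partial>P)"
      by (simp add: eu1[OF cs f'm fm] eu1[OF cs fm fm] X_def)
    have "(\<integral>w. payoff1 u (cond_dist Q g f' w) (X w) \<partial>P)
        = (\<integral>w. payoff1 u (X w) (X w) + indicator B w * pay c w \<partial>P)"
      by (rule Bochner_Integration.integral_cong[OF refl]) (simp add: Xf' pay_def indicator_def)
    also have "\<dots> = (\<integral>w. payoff1 u (X w) (X w) \<partial>P) + (\<integral>w. indicator B w * pay c w \<partial>P)"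
      by (rule Bochner_Integration.integral_add[OF intXX intB])
    finally have "(\<integral>w. indicator B w * pay c w \<partial>P) \<le> 0" using le by simp
    moreover have nn: "AE w in P. 0 \<le> indicator B w * pay c w"
      by (rule AE_I2) (simp add: indicator_def B_def)
    ultimately have "(\<integral>w. indicator B w * pay c w \<partial>P) = 0"
      using integral_nonneg_AE[OF nn] by linarith
    then have "AE w in P. indicator B w * pay c w = 0"
      using integral_nonneg_eq_0_iff_AE[OF intB nn] by simp
    with AE_space show ?thesis
    proof eventually_elim
      case (elim w)
      then show "pay c w \<le> 0"
        by (cases "w \<in> B") (auto simp: B_def)
    qed
  qed
  have "AE w in P. \<forall>c\<in>UNIV. pay c w \<le> 0"
    by (rule AE_finite_allI) (auto intro: AEc)
  with AE_space show ?thesis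
  proof (eventually_elim)
    case (elim w)
    show ?case unfolding X_def[symmetric]
      by (rule nash_of[OF Xmix[OF elim(1)]]) (use elim(2) in \<open>auto simp: pay_def\<close>)
  qed
qed

lemma part2:
  fixes u :: "'c::finite \<Rightarrow> 'c \<Rightarrow> real"
  assumes sn: "sym_nash u x"
  shows "\<exists>(P::unit measure) (Q1::'c measure) (Q2::'c measure) (I1::'c measure) (I2::'c measure)
               g1 g2 (f1::'c \<Rightarrow> 'c) f2.
               indirect_CE u P Q1 Q2 I1 I2 g1 g2 f1 f2
               \<and> fully_symmetric Q1 Q2 I1 I2 g1 g2 f1 f2
               \<and> knows_state P Q1 I1 g1 \<and> knows_state P Q2 I2 g2
               \<and> (AE w in P. cond_dist Q1 g1 f1 w = x \<and> cond_dist Q2 g2 f2 w = x)"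
proof -
  have nx: "nash u x x" using sn by (simp add: sym_nash_def)
  then have mx: "mixed x" by (simp add: nash_def)
  define P :: "unit measure" where "P = return (count_space UNIV) ()"
  define Q :: "'c measure" where "Q = point_measure UNIV (\<lambda>c. ennreal (x c))"
  define I :: "'c measure" where "I = count_space UNIV"
  define g :: "unit \<Rightarrow> 'c \<Rightarrow> 'c" where "g = (\<lambda>w n. n)"
  define f :: "'c \<Rightarrow> 'c" where "f = (\<lambda>i. i)"
  have Pp: "prob_space P" unfolding P_def by (rule prob_space_return) simp
  have Qp: "prob_space Q"
  proof (rule prob_spaceI)
    have "emeasure Q UNIV = (\<Sum>a\<in>UNIV. ennreal (x a))"
      unfolding Q_def by (rule emeasure_point_measure_finite) auto
    also have "\<dots> = ennreal (\<Sum>a\<in>UNIV. x a)" using mx by (simp add: mixed_def)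
    also have "\<dots> = 1" using mx by (simp add: mixed_def)
    finally show "emeasure Q (space Q) = 1" by (simp add: Q_def space_point_measure)
  qed
  have Gm: "(\<lambda>(w,n). g w n) \<in> P \<Otimes>\<^sub>M Q \<rightarrow>\<^sub>M I"
  proof -
    have "(\<lambda>x. x) \<circ> snd \<in> P \<Otimes>\<^sub>M Q \<rightarrow>\<^sub>M I"
      by (rule measurable_comp[OF measurable_snd])
         (simp add: I_def Q_def measurable_ident_sets sets_point_measure_count_space)
    moreover have "(\<lambda>x. x) \<circ> snd = (\<lambda>(w,n). g w n)" by (auto simp: g_def fun_eq_iff)
    ultimately show ?thesis by simp
  qed
  have fm: "f \<in> I \<rightarrow>\<^sub>M count_space UNIV" by (simp add: I_def)
  have cs: "correlation_scheme P Q Q I I g g f f"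
    using Pp Qp Gm fm by (simp add: correlation_scheme_def)
  have cdx: "cond_dist Q g f w = x" for w
  proof
    fix c
    have "{n \<in> space Q. f (g w n) = c} = {c}" by (auto simp: Q_def space_point_measure f_def g_def)
    moreover have "emeasure Q {c} = ennreal (x c)"
      unfolding Q_def by (subst emeasure_point_measure_finite) auto
    ultimately show "cond_dist Q g f w c = x c"
      using mx by (simp add: cond_dist_def measure_def mixed_def)
  qed
  have mixD: "mixed (cond_dist Q g f' w)" if "f' \<in> I \<rightarrow>\<^sub>M count_space UNIV" for f' :: "'c \<Rightarrow> 'c" and w
    unfolding cond_dist_cd
    by (rule cd_mixed[OF Qp comp_meas[OF Gm that]]) (simp add: P_def)
  have intret: "(\<integral>w. F w \<partial>P) = F ()" for F :: "unit \<Rightarrow> real"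
    unfolding P_def by (rule integral_return) auto
  have CE: "indirect_CE u P Q Q I I g g f f"
    unfolding indirect_CE_def
  proof (intro conjI ballI cs)
    fix f' :: "'c \<Rightarrow> 'c" assume f': "f' \<in> I \<rightarrow>\<^sub>M count_space UNIV"
    show "exp_util1 u P Q Q g g f' f \<le> exp_util1 u P Q Q g g f f"
      using nx mixD[OF f', of "()"]
      by (simp add: eu1[OF cs f' fm] eu1[OF cs fm fm] intret cdx nash_def prob_space.prob_space[OF Pp])
    show "exp_util2 u P Q Q g g f f' \<le> exp_util2 u P Q Q g g f f"
      using nx mixD[OF f', of "()"]
      by (simp add: eu2[OF cs fm f'] eu2[OF cs fm fm] intret cdx nash_def prob_space.prob_space[OF Pp])
  qed
  have ks: "knows_state P Q I g"
    unfolding knows_state_def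
    by (rule bexI[of _ "\<lambda>_. ()"]) (auto simp: P_def)
  show ?thesis
    by (rule exI[of _ P], rule exI[of _ Q], rule exI[of _ Q], rule exI[of _ I], rule exI[of _ I],
        rule exI[of _ g], rule exI[of _ g], rule exI[of _ f], rule exI[of _ f])
       (simp add: CE ks fully_symmetric_def cdx)
qed

theorem proposition4p5:
  fixes u :: "'c::finite \<Rightarrow> 'c \<Rightarrow> real"
  shows "(\<forall>(P::'w measure) (Q1::'n measure) (Q2::'n measure) (I1::'i measure) (I2::'i measure)
            g1 g2 (f1::'i \<Rightarrow> 'c) f2.
            indirect_CE u P Q1 Q2 I1 I2 g1 g2 f1 f2
            \<and> fully_symmetric Q1 Q2 I1 I2 g1 g2 f1 f2
            \<and> knows_state P Q1 I1 g1 \<and> knows_state P Q2 I2 g2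
            \<longrightarrow> (AE w in P. nash u (cond_dist Q1 g1 f1 w) (cond_dist Q2 g2 f2 w)
                              \<and> cond_dist Q1 g1 f1 w = cond_dist Q2 g2 f2 w))
       \<and> (\<forall>x. sym_nash u x \<longrightarrow>
            (\<exists>(P::unit measure) (Q1::'c measure) (Q2::'c measure) (I1::'c measure) (I2::'c measure)
               g1 g2 (f1::'c \<Rightarrow> 'c) f2.
               indirect_CE u P Q1 Q2 I1 I2 g1 g2 f1 f2
               \<and> fully_symmetric Q1 Q2 I1 I2 g1 g2 f1 f2
               \<and> knows_state P Q1 I1 g1 \<and> knows_state P Q2 I2 g2
               \<and> (AE w in P. cond_dist Q1 g1 f1 w = x \<and> cond_dist Q2 g2 f2 w = x)))"
proof (intro conjI allI impI)
  fix P :: "'w measure" and Q1 Q2 :: "'n measure" and I1 I2 :: "'i measure"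
    and g1 g2 :: "'w \<Rightarrow> 'n \<Rightarrow> 'i" and f1 f2 :: "'i \<Rightarrow> 'c"
  assume H: "indirect_CE u P Q1 Q2 I1 I2 g1 g2 f1 f2
            \<and> fully_symmetric Q1 Q2 I1 I2 g1 g2 f1 f2
            \<and> knows_state P Q1 I1 g1 \<and> knows_state P Q2 I2 g2"
  then have e: "Q2 = Q1" "I2 = I1" "g2 = g1" "f2 = f1" by (auto simp: fully_symmetric_def)
  from H have "indirect_CE u P Q1 Q1 I1 I1 g1 g1 f1 f1" "knows_state P Q1 I1 g1"
    unfolding e by blast+
  from part1[OF this] show "AE w in P. nash u (cond_dist Q1 g1 f1 w) (cond_dist Q2 g2 f2 w)
                              \<and> cond_dist Q1 g1 f1 w = cond_dist Q2 g2 f2 w"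
    unfolding e by simp
next
  fix x :: "'c \<Rightarrow> real" assume "sym_nash u x"
  then show "\<exists>(P::unit measure) (Q1::'c measure) (Q2::'c measure) (I1::'c measure) (I2::'c measure)
               g1 g2 (f1::'c \<Rightarrow> 'c) f2.
               indirect_CE u P Q1 Q2 I1 I2 g1 g2 f1 f2
               \<and> fully_symmetric Q1 Q2 I1 I2 g1 g2 f1 f2
               \<and> knows_state P Q1 I1 g1 \<and> knows_state P Q2 I2 g2
               \<and> (AE w in P. cond_dist Q1 g1 f1 w = x \<and> cond_dist Q2 g2 f2 w = x)"
    by (rule part2)
qed

end
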